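(* Let $n\ge 2$ and $v\in A_n$. Then $1$ and $2$ lie in the same cycle of $v$ if and only if $\ell_{T(A_n)}(v)$ is odd.
   Context: $A_n$ is the alternating group on $\{1,\dots,n\}$, $T(A_n)=\{(1\,2)(i\,j)\mid 1\le i<j\le n\}$, and $\ell_{T(A_n)}(v)=\min\{k\ge 0\mid v=t_1\cdots t_k,\ t_i\in T(A_n)\}$. Cycles refer to the disjoint cycle decomposition of $v$ (fixed points are cycles of length 1). *)

theory Defs
  imports "HOL-Combinatorics.Combinatorics"
begin

definition alt_group :: "nat \<Rightarrow> (nat \<Rightarrow> nat) set" where
  "alt_group n = {v. v permutes {1..n} \<and> evenperm v}"

definition TA :: "nat \<Rightarrow> (nat \<Rightarrow> nat) set" where
  "TA n = {Transposition.transpose (1::nat) 2 \<circ> Transposition.transpose i j | i j. 1 \<le> i \<and> i < j \<and> j \<le> n}"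

definition lenTA :: "nat \<Rightarrow> (nat \<Rightarrow> nat) \<Rightarrow> nat" where
  "lenTA n v = (LEAST k. \<exists>ts. length ts = k \<and> set ts \<subseteq> TA n \<and> v = foldr (\<circ>) ts id)"

definition same_cycle :: "(nat \<Rightarrow> nat) \<Rightarrow> nat \<Rightarrow> nat \<Rightarrow> bool" where
  "same_cycle v a b \<longleftrightarrow> (\<exists>k. (v ^^ k) a = b)"

end

theory Submission
  imports Defs
begin

lemma sc_refl: "same_cycle u x x"
  unfolding same_cycle_def by (rule exI[of _ 0]) simp

lemma sc_trans: "same_cycle u x y \<Longrightarrow> same_cycle u y z \<Longrightarrow> same_cycle u x z"
  unfolding same_cycle_def by (metis funpow_add o_apply)

lemma sc_sym:
  assumes "permutation u" "same_cycle u x y" shows "same_cycle u y x"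
proof -
  obtain N where N: "u ^^ N = id" "N > 0" using permutation_is_nilpotent[OF assms(1)] by blast
  obtain k where k: "(u ^^ k) x = y" using assms(2) unfolding same_cycle_def by blast
  have "(u ^^ ((N - 1) * k)) y = (u ^^ ((N - 1) * k + k)) x"
    using k by (simp add: funpow_add)
  also have "(N - 1) * k + k = N * k" using N(2) by (cases N) auto
  also have "u ^^ (N * k) = id" by (metis N(1) funpow_mult id_funpow mult.commute)
  finally show ?thesis unfolding same_cycle_def by auto
qed

definition orb :: "(nat \<Rightarrow> nat) \<Rightarrow> nat \<Rightarrow> nat set" where
  "orb u x = {y. same_cycle u x y}"

definition ncyc :: "nat set \<Rightarrow> (nat \<Rightarrow> nat) \<Rightarrow> nat" where
  "ncyc S u = card (orb u ` S)"

lemma orb_eq: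
  assumes "permutation u" "same_cycle u x y" shows "orb u x = orb u y"
  unfolding orb_def using assms sc_sym sc_trans by blast

lemma in_orb: "x \<in> orb u x" unfolding orb_def by (simp add: sc_refl)

lemma funpow_mod:
  assumes "(f ^^ p) x = x" shows "(f ^^ k) x = (f ^^ (k mod p)) x"
proof -
  have per: "(f ^^ (p * q)) x = x" for q
    by (induct q) (simp_all add: funpow_add assms)
  have "k = k mod p + p * (k div p)" by simp
  hence "(f ^^ k) x = (f ^^ (k mod p)) ((f ^^ (p * (k div p))) x)"
    by (metis funpow_add o_apply)
  thus ?thesis using per by simp
qed

lemma agree:
  fixes u :: "nat \<Rightarrow> nat"
  assumes "\<forall>i<m. (u ^^ Suc i) x \<notin> {a, b}" "i \<le> m"
  shows "((Transposition.transpose a b \<circ> u) ^^ i) x = (u ^^ i) x"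
  using assms(2)
proof (induct i)
  case 0 then show ?case by (simp add: funpow_0)
next
  case (Suc i)
  hence "(u ^^ Suc i) x \<notin> {a, b}" using assms(1) by auto
  then show ?case using Suc by simp
qed

lemma lemY:
  assumes "permutation u" "a \<noteq> b" "\<not> same_cycle u a b"
  shows "same_cycle (Transposition.transpose a b \<circ> u) a b"
proof -
  let ?w = "Transposition.transpose a b \<circ> u"
  have pw: "permutation ?w" by (simp add: assms(1) permutation_compose permutation_swap_id)
  define p where "p = least_power u b"
  have p: "(u ^^ p) b = b" "p > 0" using least_power_of_permutation[OF assms(1)] p_def by auto
  have min: "(u ^^ m) b \<noteq> b" if "0 < m" "m < p" for m
    using least_power_le[where f=u and n=m and x=b] that p_def by force
  have na: "(u ^^ m) b \<noteq> a" for m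
    using assms(3) sc_sym[OF assms(1)] unfolding same_cycle_def by blast
  have "\<forall>i<p - 1. (u ^^ Suc i) b \<notin> {a, b}"
  proof (intro allI impI)
    fix i assume "i < p - 1"
    then show "(u ^^ Suc i) b \<notin> {a, b}" using min[of "Suc i"] na[of "Suc i"] by auto
  qed
  hence e: "(?w ^^ (p - 1)) b = (u ^^ (p - 1)) b" using agree by blast
  have "(?w ^^ p) b = ?w ((?w ^^ (p - 1)) b)" using p(2)
    by (metis Suc_pred' comp_apply funpow.simps(2))
  also have "\<dots> = Transposition.transpose a b ((u ^^ p) b)" using e p(2)
    by (metis Suc_pred' comp_apply funpow.simps(2))
  also have "\<dots> = a" using p by simp
  finally have "same_cycle ?w b a" unfolding same_cycle_def by blast
  thus ?thesis using sc_sym[OF pw] by blast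
qed

lemma split:
  assumes "permutation u" "a \<noteq> b" "same_cycle u a b"
  shows "\<not> same_cycle (Transposition.transpose a b \<circ> u) a b"
    and "same_cycle u a x \<Longrightarrow> same_cycle (Transposition.transpose a b \<circ> u) a x \<or>
             same_cycle (Transposition.transpose a b \<circ> u) b x"
proof -
  let ?w = "Transposition.transpose a b \<circ> u"
  define p where "p = least_power u a"
  have p: "(u ^^ p) a = a" "p > 0" using least_power_of_permutation[OF assms(1)] p_def by auto
  have min: "(u ^^ m) a \<noteq> a" if "0 < m" "m < p" for m
    using least_power_le[where f=u and n=m and x=a] that p_def by force
  define j where "j = (LEAST j. (u ^^ j) a = b)"
  have ex: "\<exists>j. (u ^^ j) a = b" using assms(3) unfolding same_cycle_def .
  have j: "(u ^^ j) a = b" unfolding j_def using LeastI_ex[OF ex] .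
  have jmin: "(u ^^ i) a \<noteq> b" if "i < j" for i using not_less_Least[of i "\<lambda>j. (u ^^ j) a = b"] that j_def by blast
  have j0: "j > 0" using j assms(2) by (cases j) auto
  have "(u ^^ (j mod p)) a = b" using j funpow_mod[OF p(1), of j] by simp
  hence "\<not> j mod p < j" using jmin by blast
  hence jp: "j < p" using p(2) by (metis mod_less_divisor mod_less_eq_dividend order_le_less_trans le_neq_implies_less linorder_not_le)
  have "\<forall>i<j - 1. (u ^^ Suc i) a \<notin> {a, b}"
  proof (intro allI impI)
    fix i assume "i < j - 1"
    then show "(u ^^ Suc i) a \<notin> {a, b}" using min[of "Suc i"] jmin[of "Suc i"] jp by auto
  qed
  hence ea: "(?w ^^ i) a = (u ^^ i) a" if "i \<le> j - 1" for i using agree that by blast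
  have wj: "(?w ^^ j) a = a"
  proof -
    have "(?w ^^ j) a = ?w ((?w ^^ (j - 1)) a)" using j0
      by (metis Suc_pred' comp_apply funpow.simps(2))
    also have "\<dots> = Transposition.transpose a b ((u ^^ j) a)" using ea[of "j-1"] j0
      by (metis Suc_pred' comp_apply funpow.simps(2) order_refl)
    also have "\<dots> = a" using j by simp
    finally show ?thesis .
  qed
  show "\<not> same_cycle ?w a b"
  proof
    assume "same_cycle ?w a b"
    then obtain k where k: "(?w ^^ k) a = b" unfolding same_cycle_def by blast
    have "k mod j < j" using j0 by simp
    hence "(?w ^^ (k mod j)) a = (u ^^ (k mod j)) a" using ea by simp
    moreover have "(?w ^^ (k mod j)) a = b" using k funpow_mod[OF wj, of k] by simp
    ultimately show False using jmin[OF \<open>k mod j < j\<close>] by simp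
  qed
  assume "same_cycle u a x"
  then obtain k where k: "(u ^^ k) a = x" unfolding same_cycle_def by blast
  define i where "i = k mod p"
  have x: "(u ^^ i) a = x" using k funpow_mod[OF p(1), of k] i_def by simp
  have ip: "i < p" using p(2) i_def by simp
  show "same_cycle ?w a x \<or> same_cycle ?w b x"
  proof (cases "i < j")
    case True
    then have "(?w ^^ i) a = x" using ea[of i] x by simp
    then show ?thesis unfolding same_cycle_def by blast
  next
    case False
    have ub: "(u ^^ m) b = (u ^^ (m + j)) a" for m using j by (simp add: funpow_add)
    have inj: "inj u" using assms(1) permutation_bijective bij_is_inj by blast
    have "\<forall>i'<p - 1 - j. (u ^^ Suc i') b \<notin> {a, b}"
    proof (intro allI impI)
      fix i' assume i': "i' < p - 1 - j"
      have "(u ^^ (Suc i' + j)) a \<noteq> a" using min[of "Suc i' + j"] i' by auto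
      moreover have "(u ^^ (Suc i' + j)) a \<noteq> b"
      proof
        assume "(u ^^ (Suc i' + j)) a = b"
        hence "(u ^^ j) a = (u ^^ (Suc i' + j)) a" using j by simp
        hence "(u ^^ (Suc i' + j - j)) a = a" using funpow_diff[OF inj, of j "Suc i' + j" a] by simp
        moreover have "Suc i' < p" using i' by linarith
        ultimately show False using min[of "Suc i'"] by simp
      qed
      ultimately show "(u ^^ Suc i') b \<notin> {a, b}" using ub by simp
    qed
    hence "(?w ^^ (i - j)) b = (u ^^ (i - j)) b" using agree[where m="p - 1 - j" and u=u and x=b and a=a and b=b and i="i - j"] ip by auto
    also have "\<dots> = x" using ub[of "i - j"] False x by simp
    finally show ?thesis unfolding same_cycle_def by auto
  qed
qed

lemma cnt:
  assumes "finite S" "u permutes S" "a \<in> S" "b \<in> S" "a \<noteq> b" "same_cycle u a b"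
  shows "ncyc S (Transposition.transpose a b \<circ> u) = Suc (ncyc S u)"
proof -
  let ?w = "Transposition.transpose a b \<circ> u"
  let ?O = "orb u a"
  have pu: "permutation u" using assms(1,2) permutes_imp_permutation by blast
  have pw: "permutation ?w" by (simp add: pu permutation_compose permutation_swap_id)
  have outside: "orb ?w x = orb u x" if "\<not> same_cycle u a x" for x
  proof -
    have "(?w ^^ k) x = (u ^^ k) x" for k
    proof (rule agree[where m=k], intro allI impI)
      fix i assume "i < k"
      show "(u ^^ Suc i) x \<notin> {a, b}"
      proof
        assume "(u ^^ Suc i) x \<in> {a, b}"
        hence "same_cycle u x a \<or> same_cycle u x b" unfolding same_cycle_def by blast
        hence "same_cycle u x a"
          using sc_sym[OF pu assms(6)] sc_trans by blast
        thus False using that sc_sym[OF pu] by blast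
      qed
    qed simp
    thus ?thesis unfolding orb_def same_cycle_def by simp
  qed
  have inO: "orb u x = ?O" if "same_cycle u a x" for x
    using orb_eq[OF pu that] by simp
  have A1: "orb ?w ` S = orb u ` (S - ?O) \<union> {orb ?w a, orb ?w b}"
  proof (intro equalityI subsetI)
    fix X assume "X \<in> orb ?w ` S"
    then obtain x where x: "x \<in> S" "X = orb ?w x" by blast
    show "X \<in> orb u ` (S - ?O) \<union> {orb ?w a, orb ?w b}"
    proof (cases "same_cycle u a x")
      case True
      then have "same_cycle ?w a x \<or> same_cycle ?w b x" using split(2)[OF pu assms(5,6)] by blast
      then have "X = orb ?w a \<or> X = orb ?w b" using orb_eq[OF pw, of a x] orb_eq[OF pw, of b x] x by metis
      then show ?thesis by blast
    next
      case False
      then have "x \<in> S - ?O" using x unfolding orb_def by simp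
      moreover have "X = orb u x" using outside[OF False] x by simp
      ultimately show ?thesis by blast
    qed
  next
    fix X assume "X \<in> orb u ` (S - ?O) \<union> {orb ?w a, orb ?w b}"
    then show "X \<in> orb ?w ` S"
    proof
      assume "X \<in> orb u ` (S - ?O)"
      then obtain y where y: "y \<in> S" "y \<notin> ?O" "X = orb u y" by blast
      then have "\<not> same_cycle u a y" unfolding orb_def by simp
      then have "X = orb ?w y" using outside y by simp
      then show ?thesis using y by blast
    qed (use assms(3,4) in auto)
  qed
  have A2: "orb u ` S = orb u ` (S - ?O) \<union> {?O}"
  proof -
    have "orb u ` S = orb u ` (S - ?O) \<union> orb u ` (S \<inter> ?O)" by auto
    moreover have "orb u ` (S \<inter> ?O) = {?O}"
    proof -
      have "orb u y = ?O" if "y \<in> ?O" for y using inO that unfolding orb_def by simp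
      moreover have "a \<in> S \<inter> ?O" using assms(3) in_orb[of a u] by simp
      ultimately show ?thesis by blast
    qed
    ultimately show ?thesis by simp
  qed
  have notin: "Y \<notin> orb u ` (S - ?O)" if "z \<in> Y" "same_cycle u a z" for Y z
  proof
    assume "Y \<in> orb u ` (S - ?O)"
    then obtain y where y: "y \<notin> ?O" "Y = orb u y" by blast
    then have "same_cycle u y z" using that(1) unfolding orb_def by simp
    then have "same_cycle u a y" using that(2) sc_sym[OF pu] sc_trans by metis
    then show False using y(1) unfolding orb_def by simp
  qed
  have wa: "orb ?w a \<subseteq> ?O"
  proof
    fix y assume "y \<in> orb ?w a"
    hence y: "same_cycle ?w a y" unfolding orb_def by simp
    show "y \<in> ?O"
    proof (rule ccontr)
      assume "y \<notin> ?O"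
      hence "\<not> same_cycle u a y" unfolding orb_def by simp
      hence "orb ?w y = orb u y" using outside by simp
      moreover have "a \<in> orb ?w y" using sc_sym[OF pw y] unfolding orb_def by simp
      ultimately have "same_cycle u y a" unfolding orb_def by simp
      thus False using \<open>y \<notin> ?O\<close> sc_sym[OF pu] unfolding orb_def by blast
    qed
  qed
  have n1: "orb ?w a \<notin> orb u ` (S - ?O)" using notin[of a] in_orb sc_refl by blast
  have n2: "orb ?w b \<notin> orb u ` (S - ?O)" using notin[of b "orb ?w b"] in_orb assms(6) by blast
  have n3: "?O \<notin> orb u ` (S - ?O)" using notin[of a ?O] in_orb sc_refl by blast
  have n4: "orb ?w a \<noteq> orb ?w b"
    using split(1)[OF pu assms(5,6)] in_orb[of b ?w] unfolding orb_def by auto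
  have fin: "finite (orb u ` (S - ?O))" using assms(1) by simp
  show ?thesis unfolding ncyc_def A1 A2 using fin n1 n2 n3 n4 by simp
qed

lemma cnt_ge:
  assumes "finite S" "u permutes S" "a \<in> S" "b \<in> S"
  shows "ncyc S u \<le> Suc (ncyc S (Transposition.transpose a b \<circ> u))"
proof (cases "a = b")
  case True then show ?thesis by simp
next
  case False
  let ?w = "Transposition.transpose a b \<circ> u"
  have pu: "permutation u" using assms(1,2) permutes_imp_permutation by blast
  have ww: "?w permutes S" by (simp add: assms permutes_compose permutes_swap_id)
  have pw: "permutation ?w" by (simp add: pu permutation_compose permutation_swap_id)
  have uw: "Transposition.transpose a b \<circ> ?w = u" by (simp add: o_assoc)
  show ?thesis
  proof (cases "same_cycle ?w a b")
    case True
    from cnt[OF assms(1) ww assms(3,4) False True] uw show ?thesis by simp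
  next
    case False
    from lemY[OF pw \<open>a \<noteq> b\<close> False] uw have "same_cycle u a b" by simp
    from cnt[OF assms(1,2,3,4) \<open>a \<noteq> b\<close> this] show ?thesis by simp
  qed
qed

lemma ncyc_id: "ncyc S id = card S"
proof -
  have "orb id x = {x}" for x unfolding orb_def same_cycle_def by auto
  hence "orb id ` S = (\<lambda>x. {x}) ` S" by auto
  thus ?thesis unfolding ncyc_def by (simp add: card_image inj_on_def)
qed

lemma ncyc_le: "finite S \<Longrightarrow> ncyc S u \<le> card S"
  unfolding ncyc_def by (rule card_image_le)

lemma lower:
  assumes "finite S" "\<forall>(a,b)\<in>set ps. a \<in> S \<and> b \<in> S"
  shows "card S \<le> ncyc S (apply_transps ps) + length ps"
  using assms(2)
proof (induct ps)
  case Nil then show ?case using ncyc_id[of S] by (simp add: id_def)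
next
  case (Cons p ps)
  obtain a b where p: "p = (a, b)" by (cases p)
  have ab: "a \<in> S" "b \<in> S" using Cons.prems p by auto
  have pm: "apply_transps ps permutes S" using Cons.prems by (intro permutes_apply_transps) auto
  have h: "ncyc S (apply_transps ps) \<le> Suc (ncyc S (Transposition.transpose a b \<circ> apply_transps ps))"
    using cnt_ge[OF assms(1) pm ab] .
  have e: "apply_transps (p # ps) = Transposition.transpose a b \<circ> apply_transps ps" using p by simp
  have ih: "card S \<le> ncyc S (apply_transps ps) + length ps" using Cons by auto
  show ?case unfolding e length_Cons using ih h by linarith
qed

lemma upper:
  assumes "finite S"
  shows "u permutes S \<Longrightarrow> \<exists>ps. (\<forall>(a,b)\<in>set ps. a \<in> S \<and> b \<in> S) \<and>
            length ps = card S - ncyc S u \<and> apply_transps ps = u"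
proof (induct "card S - ncyc S u" arbitrary: u rule: less_induct)
  case less
  show ?case
  proof (cases "u = id")
    case True then show ?thesis by (intro exI[of _ "[]"]) (simp add: ncyc_id)
  next
    case False
    then obtain x where x: "u x \<noteq> x" by (metis eq_id_iff)
    have xS: "x \<in> S" using less.prems x permutes_not_in by metis
    have uxS: "u x \<in> S" using less.prems xS permutes_in_image by metis
    have sc: "same_cycle u x (u x)" unfolding same_cycle_def by (rule exI[of _ 1]) simp
    let ?w = "Transposition.transpose x (u x) \<circ> u"
    have c: "ncyc S ?w = Suc (ncyc S u)" using cnt[OF assms less.prems xS uxS] x sc by metis
    have ww: "?w permutes S" by (simp add: less.prems xS uxS permutes_compose permutes_swap_id)
    have le: "ncyc S ?w \<le> card S" using ncyc_le[OF assms] .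
    then obtain ps where ps: "\<forall>(a,b)\<in>set ps. a \<in> S \<and> b \<in> S"
      "length ps = card S - ncyc S ?w" "apply_transps ps = ?w"
      using less.hyps[OF _ ww] c by fastforce
    show ?thesis
      using ps c le xS uxS
      by (intro exI[of _ "(x, u x) # ps"]) (auto simp add: o_assoc)
  qed
qed

lemma lemX:
  assumes "finite S" "\<forall>(a,b)\<in>set ps. a \<in> S \<and> b \<in> S" "a \<in> S" "b \<in> S" "a \<noteq> b"
    "same_cycle (apply_transps ps) a b"
  shows "\<exists>qs. (\<forall>(a,b)\<in>set qs. a \<in> S \<and> b \<in> S) \<and> length qs < length ps \<and>
             apply_transps qs = Transposition.transpose a b \<circ> apply_transps ps"
proof -
  let ?u = "apply_transps ps"
  have pm: "?u permutes S" using assms(2) by (intro permutes_apply_transps) auto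
  have c: "ncyc S (Transposition.transpose a b \<circ> ?u) = Suc (ncyc S ?u)"
    using cnt[OF assms(1) pm assms(3-6)] .
  have lo: "card S \<le> ncyc S ?u + length ps" using lower[OF assms(1,2)] .
  have le: "ncyc S (Transposition.transpose a b \<circ> ?u) \<le> card S" using ncyc_le[OF assms(1)] .
  have wm: "Transposition.transpose a b \<circ> ?u permutes S"
    using pm assms(3,4) by (simp add: permutes_compose permutes_swap_id)
  obtain qs where "\<forall>(a,b)\<in>set qs. a \<in> S \<and> b \<in> S"
     "length qs = card S - ncyc S (Transposition.transpose a b \<circ> ?u)"
     "apply_transps qs = Transposition.transpose a b \<circ> ?u"
    using upper[OF assms(1) wm] by blast
  then show ?thesis using c lo le by (intro exI[of _ qs]) auto
qed

lemma conj_tr: "Transposition.transpose c d \<circ> Transposition.transpose i j \<circ> Transposition.transpose c d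
   = Transposition.transpose (Transposition.transpose c d i) (Transposition.transpose c d j)"
  by (auto simp: fun_eq_iff transpose_def)

lemma ta_mem:
  assumes "i \<noteq> j" "i \<in> {1..n}" "j \<in> {1..n}"
  shows "Transposition.transpose (1::nat) 2 \<circ> Transposition.transpose i j \<in> TA n"
proof (cases "i < j")
  case True then show ?thesis using assms unfolding TA_def by auto
next
  case False
  then have "j < i" using assms(1) by simp
  have "Transposition.transpose i j = Transposition.transpose j i" by (rule transpose_commute)
  then show ?thesis using assms \<open>j < i\<close> unfolding TA_def by fastforce
qed

lemma sig_in: "n \<ge> 2 \<Longrightarrow> x \<in> {1..n} \<Longrightarrow> Transposition.transpose (1::nat) 2 x \<in> {1..n}"
  by (auto simp: transpose_def)

lemma W1:
  assumes "n \<ge> 2"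
  shows "set ts \<subseteq> TA n \<Longrightarrow> \<exists>ps. (\<forall>(a,b)\<in>set ps. a \<in> {1..n} \<and> b \<in> {1..n}) \<and> length ps = length ts \<and>
     apply_transps ps = (if even (length ts) then foldr (\<circ>) ts id
                         else Transposition.transpose (1::nat) 2 \<circ> foldr (\<circ>) ts id)"
proof (induct ts)
  case Nil then show ?case by (intro exI[of _ "[]"]) simp
next
  case (Cons t ts)
  let ?s = "Transposition.transpose (1::nat) 2"
  obtain ps where ps: "\<forall>(a,b)\<in>set ps. a \<in> {1..n} \<and> b \<in> {1..n}" "length ps = length ts"
     "apply_transps ps = (if even (length ts) then foldr (\<circ>) ts id else ?s \<circ> foldr (\<circ>) ts id)"
    using Cons by auto
  from Cons.prems obtain i j where t: "t = ?s \<circ> Transposition.transpose i j" "1 \<le> i" "i < j" "j \<le> n"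
    unfolding TA_def by auto
  show ?case
  proof (cases "even (length ts)")
    case True
    have "?s \<circ> foldr (\<circ>) (t # ts) id = Transposition.transpose i j \<circ> apply_transps ps"
      using True ps(3) t(1) by (simp add: o_assoc)
    then show ?thesis using True ps t
      by (intro exI[of _ "(i, j) # ps"]) auto
  next
    case False
    have "foldr (\<circ>) (t # ts) id = (?s \<circ> Transposition.transpose i j \<circ> ?s) \<circ> (?s \<circ> foldr (\<circ>) ts id)"
      using t(1) by (simp add: fun_eq_iff)
    also have "\<dots> = Transposition.transpose (?s i) (?s j) \<circ> apply_transps ps"
      using False ps(3) by (simp only: conj_tr) simp
    finally show ?thesis using False ps t sig_in[OF assms, of i] sig_in[OF assms, of j]
      by (intro exI[of _ "(?s i, ?s j) # ps"]) auto
  qed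
qed

lemma W2:
  assumes "n \<ge> 2"
  shows "\<forall>(a,b)\<in>set ps. a \<noteq> b \<and> a \<in> {1..n} \<and> b \<in> {1..n} \<Longrightarrow>
     \<exists>ts. set ts \<subseteq> TA n \<and> length ts = length ps \<and>
     foldr (\<circ>) ts id = (if even (length ps) then apply_transps ps
                         else Transposition.transpose (1::nat) 2 \<circ> apply_transps ps)"
proof (induct ps)
  case Nil then show ?case by (intro exI[of _ "[]"]) simp
next
  case (Cons p ps)
  let ?s = "Transposition.transpose (1::nat) 2"
  obtain i j where p: "p = (i, j)" by (cases p)
  have ij: "i \<noteq> j" "i \<in> {1..n}" "j \<in> {1..n}" using Cons.prems p by auto
  obtain ts where ts: "set ts \<subseteq> TA n" "length ts = length ps"
     "foldr (\<circ>) ts id = (if even (length ps) then apply_transps ps else ?s \<circ> apply_transps ps)"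
  proof -
    have "\<forall>(a,b)\<in>set ps. a \<noteq> b \<and> a \<in> {1..n} \<and> b \<in> {1..n}" using Cons.prems by auto
    then show ?thesis using Cons.hyps that by blast
  qed
  show ?case
  proof (cases "even (length ps)")
    case True
    have hv: "foldr (\<circ>) ((?s \<circ> Transposition.transpose i j) # ts) id = ?s \<circ> apply_transps (p # ps)"
      using True ts(3) p by (simp add: o_assoc)
    show ?thesis
    proof (intro exI[of _ "(?s \<circ> Transposition.transpose i j) # ts"] conjI)
      show "set ((?s \<circ> Transposition.transpose i j) # ts) \<subseteq> TA n" using ts(1) ta_mem[OF ij] by simp
      show "length ((?s \<circ> Transposition.transpose i j) # ts) = length (p # ps)" using ts(2) by simp
      show "foldr (\<circ>) ((?s \<circ> Transposition.transpose i j) # ts) id = (if even (length (p # ps))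
         then apply_transps (p # ps) else ?s \<circ> apply_transps (p # ps))"
        using True by (subst hv) simp
    qed
  next
    case False
    have ne: "?s i \<noteq> ?s j" using ij(1) by (auto simp: transpose_def)
    have "apply_transps (p # ps) = ?s \<circ> (?s \<circ> Transposition.transpose i j \<circ> ?s) \<circ> (?s \<circ> apply_transps ps)"
      using p by (simp add: fun_eq_iff)
    also have "\<dots> = ?s \<circ> Transposition.transpose (?s i) (?s j) \<circ> foldr (\<circ>) ts id"
      using False ts(3) by (simp only: conj_tr) simp
    finally have hv: "foldr (\<circ>) ((?s \<circ> Transposition.transpose (?s i) (?s j)) # ts) id = apply_transps (p # ps)"
      by (simp add: o_assoc)
    show ?thesis
    proof (intro exI[of _ "(?s \<circ> Transposition.transpose (?s i) (?s j)) # ts"] conjI)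
      show "set ((?s \<circ> Transposition.transpose (?s i) (?s j)) # ts) \<subseteq> TA n"
        using ts(1) ta_mem[OF ne sig_in[OF assms ij(2)] sig_in[OF assms ij(3)]] by simp
      show "length ((?s \<circ> Transposition.transpose (?s i) (?s j)) # ts) = length (p # ps)" using ts(2) by simp
      show "foldr (\<circ>) ((?s \<circ> Transposition.transpose (?s i) (?s j)) # ts) id = (if even (length (p # ps))
         then apply_transps (p # ps) else ?s \<circ> apply_transps (p # ps))"
        using False by (subst hv) simp
    qed
  qed
qed

lemma filt: "apply_transps (filter (\<lambda>(a,b). a \<noteq> b) ps) = apply_transps ps"
  by (induct ps) auto

theorem corollary6p2:
  fixes n :: nat and v :: "nat \<Rightarrow> nat"
  assumes "n \<ge> 2" and "v \<in> alt_group n"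
  shows "same_cycle v 1 2 \<longleftrightarrow> odd (lenTA n v)"
proof -
  let ?S = "{1..n}"
  let ?s = "Transposition.transpose (1::nat) 2"
  have vp: "v permutes ?S" "evenperm v" using assms(2) unfolding alt_group_def by auto
  have fin: "finite ?S" by simp
  have pv: "permutation v" using permutes_imp_permutation[OF fin vp(1)] .
  define P where "P k = (\<exists>ts. length ts = k \<and> set ts \<subseteq> TA n \<and> v = foldr (\<circ>) ts id)" for k
  have lenP: "lenTA n v = (LEAST k. P k)" unfolding lenTA_def P_def by simp
  have mk: "\<exists>ts. set ts \<subseteq> TA n \<and> length ts \<le> K \<and> foldr (\<circ>) ts id = v"
    if h1: "\<forall>(a,b)\<in>set ps. a \<in> ?S \<and> b \<in> ?S" and h2: "length ps \<le> K"
      and h3: "apply_transps ps = v \<or> apply_transps ps = ?s \<circ> v" for ps K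
  proof -
    define qs where "qs = filter (\<lambda>(a,b). a \<noteq> b) ps"
    have q1: "\<forall>(a,b)\<in>set qs. a \<noteq> b \<and> a \<in> ?S \<and> b \<in> ?S" using h1 unfolding qs_def by auto
    have q2: "length qs \<le> K" using h2 length_filter_le[of _ ps] unfolding qs_def by (meson order_trans)
    have q3: "apply_transps qs = apply_transps ps" unfolding qs_def by (rule filt)
    have q4: "\<forall>(a,b)\<in>set qs. a \<noteq> b" using q1 by auto
    have ev: "evenperm (apply_transps qs) \<longleftrightarrow> even (length qs)"
      using evenperm_apply_transps_iff[OF q4] .
    obtain ts where ts: "set ts \<subseteq> TA n" "length ts = length qs"
      "foldr (\<circ>) ts id = (if even (length qs) then apply_transps qs else ?s \<circ> apply_transps qs)"
      using W2[OF assms(1) q1] by blast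
    from h3 show ?thesis
    proof
      assume "apply_transps ps = v"
      then have "even (length qs)" using ev q3 vp(2) by simp
      then show ?thesis using ts q2 q3 \<open>apply_transps ps = v\<close> by auto
    next
      assume a: "apply_transps ps = ?s \<circ> v"
      have "\<not> evenperm (?s \<circ> v)"
        using evenperm_comp[OF permutation_swap_id pv, of 1 2] evenperm_swap[of "1::nat" 2] vp(2) by simp
      then have "odd (length qs)" using ev q3 a by simp
      moreover have "?s \<circ> (?s \<circ> v) = v" by (simp add: o_assoc)
      ultimately show ?thesis using ts q2 q3 a by auto
    qed
  qed
  have nomk: False if n1: "\<forall>(a,b)\<in>set ps. a \<in> ?S \<and> b \<in> ?S" and n2: "length ps < lenTA n v"
      and n3: "apply_transps ps = v \<or> apply_transps ps = ?s \<circ> v" for ps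
  proof -
    obtain ts where ts: "set ts \<subseteq> TA n" "length ts \<le> length ps" "foldr (\<circ>) ts id = v"
      using mk[OF n1 order_refl n3] by blast
    have "P (length ts)" unfolding P_def using ts by auto
    moreover have "length ts < (LEAST k. P k)" using ts(2) n2 lenP by simp
    ultimately show False using not_less_Least by blast
  qed
  have exP: "\<exists>k. P k"
  proof -
    obtain xs where xs: "\<forall>(a,b)\<in>set xs. a \<noteq> b \<and> a \<in> ?S \<and> b \<in> ?S" "apply_transps xs = v"
      using permutes_from_transpositions[OF vp(1) fin] by blast
    have "\<forall>(a,b)\<in>set xs. a \<in> ?S \<and> b \<in> ?S" using xs(1) by auto
    then obtain ts where "set ts \<subseteq> TA n" "foldr (\<circ>) ts id = v"
      using mk[OF _ order_refl] xs(2) by blast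
    then show ?thesis unfolding P_def by auto
  qed
  have "P (lenTA n v)" unfolding lenP by (rule LeastI_ex[OF exP])
  then obtain ts where ts: "length ts = lenTA n v" "set ts \<subseteq> TA n" "v = foldr (\<circ>) ts id"
    unfolding P_def by blast
  obtain ps where ps: "\<forall>(a,b)\<in>set ps. a \<in> ?S \<and> b \<in> ?S" "length ps = lenTA n v"
     "apply_transps ps = (if even (lenTA n v) then v else ?s \<circ> v)"
    using W1[OF assms(1) ts(2)] ts(1) ts(3)[symmetric] by auto
  have S12: "(1::nat) \<in> ?S" "(2::nat) \<in> ?S" using assms(1) by auto
  show ?thesis
  proof
    assume sc: "same_cycle v 1 2"
    show "odd (lenTA n v)"
    proof (rule ccontr)
      assume "\<not> odd (lenTA n v)"
      then have ap: "apply_transps ps = v" using ps(3) by simp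
      obtain qs where "\<forall>(a,b)\<in>set qs. a \<in> ?S \<and> b \<in> ?S" "length qs < length ps"
          "apply_transps qs = ?s \<circ> apply_transps ps"
        using lemX[OF fin ps(1) S12] sc ap by auto
      then show False using nomk[of qs] ap ps(2) by auto
    qed
  next
    assume od: "odd (lenTA n v)"
    show "same_cycle v 1 2"
    proof (rule ccontr)
      assume nsc: "\<not> same_cycle v 1 2"
      have ap: "apply_transps ps = ?s \<circ> v" using ps(3) od by simp
      have sc: "same_cycle (apply_transps ps) 1 2" using lemY[OF pv _ nsc] ap by simp
      obtain qs where "\<forall>(a,b)\<in>set qs. a \<in> ?S \<and> b \<in> ?S" "length qs < length ps"
          "apply_transps qs = ?s \<circ> apply_transps ps"
        using lemX[OF fin ps(1) S12 _ sc] by auto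
      moreover have "?s \<circ> apply_transps ps = v" using ap by (simp add: o_assoc)
      ultimately show False using nomk[of qs] ps(2) by auto
    qed
  qed
qed

end
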